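(* Let $\mathcal{I}$ be a proper admissible ideal on $\omega$ and $X$ a topological space. If ONE does not have a winning strategy in the $\mathcal{I}$-Hurewicz game $\mathcal{I}H(X)$, then $X$ satisfies $S_{fin}(\Lambda, \mathcal{I}\text{-}\mathcal{O}^{gp})$.
   Context: The game $\mathcal{I}H(X)$: in round $n\in\omega$ ONE chooses an open cover $\mathcal{U}_n$ of $X$ and TWO chooses a finite $\mathcal{V}_n\subseteq\mathcal{U}_n$; TWO wins if for each $x\in X$, $\{n : x\notin\bigcup\mathcal{V}_n\}\in\mathcal{I}$, otherwise ONE wins. $\Lambda$ denotes the collection of large covers of $X$ (open covers such that each point of $X$ belongs to infinitely many members). An open cover $\mathcal{U}$ is $\mathcal{I}$-groupable if $\mathcal{U}=\bigcup_n\mathcal{U}_n$ with the $\mathcal{U}_n$ finite, pairwise disjoint, and for each $x$, $\{n : x\notin\bigcup\mathcal{U}_n\}\in\mathcal{I}$; $\mathcal{I}\text{-}\mathcal{O}^{gp}$ is the collection of such covers. $S_{fin}(\Lambda,\mathcal{I}\text{-}\mathcal{O}^{gp})$: for each sequence $\langle\mathcal{U}_n\rangle$ of large covers there are finite $\mathcal{V}_n\subseteq\mathcal{U}_n$ with $\bigcup_n\mathcal{V}_n\in\mathcal{I}\text{-}\mathcal{O}^{gp}$. *)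

theory Defs
  imports "HOL-Analysis.Analysis"
begin

definition is_ideal :: "nat set set \<Rightarrow> bool" where
  "is_ideal I \<longleftrightarrow> {} \<in> I \<and> (\<forall>A B. A \<in> I \<and> B \<subseteq> A \<longrightarrow> B \<in> I)
     \<and> (\<forall>A B. A \<in> I \<and> B \<in> I \<longrightarrow> A \<union> B \<in> I)"

definition proper_ideal :: "nat set set \<Rightarrow> bool" where
  "proper_ideal I \<longleftrightarrow> is_ideal I \<and> UNIV \<notin> I"

definition admissible_ideal :: "nat set set \<Rightarrow> bool" where
  "admissible_ideal I \<longleftrightarrow> is_ideal I \<and> (\<forall>n. {n} \<in> I)"

definition open_cover :: "'a topology \<Rightarrow> 'a set set \<Rightarrow> bool" where
  "open_cover T \<U> \<longleftrightarrow> (\<forall>U\<in>\<U>. openin T U) \<and> topspace T \<subseteq> \<Union>\<U>"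

definition large_cover :: "'a topology \<Rightarrow> 'a set set \<Rightarrow> bool" where
  "large_cover T \<U> \<longleftrightarrow> open_cover T \<U> \<and> (\<forall>x\<in>topspace T. infinite {U\<in>\<U>. x \<in> U})"

definition I_groupable :: "nat set set \<Rightarrow> 'a topology \<Rightarrow> 'a set set \<Rightarrow> bool" where
  "I_groupable I T \<U> \<longleftrightarrow> open_cover T \<U> \<and>
     (\<exists>G :: nat \<Rightarrow> 'a set set. \<U> = (\<Union>n. G n) \<and> (\<forall>n. finite (G n))
        \<and> (\<forall>m n. m \<noteq> n \<longrightarrow> G m \<inter> G n = {})
        \<and> (\<forall>x\<in>topspace T. {n. x \<notin> \<Union>(G n)} \<in> I))"

definition S_fin_Lambda_IOgp :: "nat set set \<Rightarrow> 'a topology \<Rightarrow> bool" where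
  "S_fin_Lambda_IOgp I T \<longleftrightarrow>
     (\<forall>\<U> :: nat \<Rightarrow> 'a set set. (\<forall>n. large_cover T (\<U> n)) \<longrightarrow>
        (\<exists>\<V> :: nat \<Rightarrow> 'a set set. (\<forall>n. finite (\<V> n) \<and> \<V> n \<subseteq> \<U> n)
           \<and> I_groupable I T (\<Union>n. \<V> n)))"

text \<open>A strategy for ONE maps the finite sequence of TWO's
  previous moves to ONE's next move (an open cover).\<close>
definition strategy_ONE :: "'a topology \<Rightarrow> ('a set set list \<Rightarrow> 'a set set) \<Rightarrow> bool" where
  "strategy_ONE T \<sigma> \<longleftrightarrow> (\<forall>h. open_cover T (\<sigma> h))"

definition play_follows :: "('a set set list \<Rightarrow> 'a set set) \<Rightarrow> (nat \<Rightarrow> 'a set set) \<Rightarrow> bool" where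
  "play_follows \<sigma> \<V> \<longleftrightarrow> (\<forall>n. finite (\<V> n) \<and> \<V> n \<subseteq> \<sigma> (map \<V> [0..<n]))"

definition TWO_wins_play :: "nat set set \<Rightarrow> 'a topology \<Rightarrow> (nat \<Rightarrow> 'a set set) \<Rightarrow> bool" where
  "TWO_wins_play I T \<V> \<longleftrightarrow> (\<forall>x\<in>topspace T. {n. x \<notin> \<Union>(\<V> n)} \<in> I)"

definition ONE_has_winning_strategy_IH :: "nat set set \<Rightarrow> 'a topology \<Rightarrow> bool" where
  "ONE_has_winning_strategy_IH I T \<longleftrightarrow>
     (\<exists>\<sigma>. strategy_ONE T \<sigma> \<and> (\<forall>\<V>. play_follows \<sigma> \<V> \<longrightarrow> \<not> TWO_wins_play I T \<V>))"

end

theory Submission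
  imports Defs
begin

theorem mainTheorem2:
  fixes I :: "nat set set" and T :: "'a topology"
  assumes "proper_ideal I" and "admissible_ideal I"
    and "\<not> ONE_has_winning_strategy_IH I T"
  shows "S_fin_Lambda_IOgp I T"
  unfolding S_fin_Lambda_IOgp_def
proof (intro allI impI)
  fix \<U> :: "nat \<Rightarrow> 'a set set"
  assume L: "\<forall>n. large_cover T (\<U> n)"
  define \<sigma> where "\<sigma> h = \<U> (length h) - \<Union>{W \<in> set h. finite W}" for h :: "'a set set list"
  have str: "strategy_ONE T \<sigma>"
    unfolding strategy_ONE_def open_cover_def
  proof (intro allI conjI ballI subsetI)
    fix h U assume "U \<in> \<sigma> h"
    then show "openin T U" using L unfolding \<sigma>_def large_cover_def open_cover_def by auto
  next
    fix h :: "'a set set list" and x assume x: "x \<in> topspace T"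
    have inf: "infinite {U\<in>\<U> (length h). x \<in> U}" using L x unfolding large_cover_def by auto
    have fin: "finite (\<Union>{W \<in> set h. finite W})" by (rule finite_Union) auto
    have "infinite ({U\<in>\<U> (length h). x \<in> U} - \<Union>{W \<in> set h. finite W})"
      by (rule Diff_infinite_finite[OF fin inf])
    then have "{U\<in>\<U> (length h). x \<in> U} - \<Union>{W \<in> set h. finite W} \<noteq> {}"
      by (metis finite.emptyI)
    then obtain U where "U \<in> {U\<in>\<U> (length h). x \<in> U} - \<Union>{W \<in> set h. finite W}"
      by (meson ex_in_conv)
    then show "x \<in> \<Union>(\<sigma> h)" unfolding \<sigma>_def by auto
  qed
  with assms(3) obtain V where pf: "play_follows \<sigma> V" and tw: "TWO_wins_play I T V"
    unfolding ONE_has_winning_strategy_IH_def by blast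
  have Vn: "finite (V n) \<and> V n \<subseteq> \<U> n - \<Union>{W \<in> set (map V [0..<n]). finite W}" for n
    using pf unfolding play_follows_def \<sigma>_def by auto
  have disj: "V m \<inter> V n = {}" if "m \<noteq> n" for m n
  proof -
    have "V m \<inter> V n = {}" if "m < n" for m n
    proof -
      have "V m \<in> {W \<in> set (map V [0..<n]). finite W}" using that Vn[of m] by auto
      then have "V m \<subseteq> \<Union>{W \<in> set (map V [0..<n]). finite W}" by blast
      then show ?thesis using Vn[of n] by blast
    qed
    then show ?thesis using \<open>m \<noteq> n\<close> by (metis inf_commute linorder_neqE_nat)
  qed
  have oc: "open_cover T (\<Union>n. V n)"
    unfolding open_cover_def
  proof (intro conjI ballI subsetI)
    fix U assume "U \<in> (\<Union>n. V n)"
    then obtain n where "U \<in> V n" by auto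
    then show "openin T U" using Vn[of n] L unfolding large_cover_def open_cover_def by auto
  next
    fix x assume x: "x \<in> topspace T"
    have "{n. x \<notin> \<Union>(V n)} \<in> I" using tw x unfolding TWO_wins_play_def by auto
    then have "{n. x \<notin> \<Union>(V n)} \<noteq> UNIV" using assms(1) unfolding proper_ideal_def by auto
    then show "x \<in> \<Union>(\<Union>n. V n)" by auto
  qed
  show "\<exists>\<V>. (\<forall>n. finite (\<V> n) \<and> \<V> n \<subseteq> \<U> n) \<and> I_groupable I T (\<Union>n. \<V> n)"
  proof (intro exI conjI allI)
    fix n show "finite (V n)" using Vn by auto
    show "V n \<subseteq> \<U> n" using Vn by auto
  next
    show "I_groupable I T (\<Union>n. V n)"
      unfolding I_groupable_def
    proof (intro conjI oc exI[of _ V])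
      show "(\<Union>n. V n) = (\<Union>n. V n)" by simp
      show "\<forall>n. finite (V n)" using Vn by simp
      show "\<forall>m n. m \<noteq> n \<longrightarrow> V m \<inter> V n = {}" using disj by simp
      show "\<forall>x\<in>topspace T. {n. x \<notin> \<Union>(V n)} \<in> I" using tw unfolding TWO_wins_play_def by simp
    qed
  qed
qed

end
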